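(* Let $x,y$ be vectors in a real Hilbert space and let $p\ge1$ be an integer. If $p$ is odd or $\langle x,y\rangle\ge0$, then $$\langle x,x\rangle^p-2\langle x,y\rangle^p+\langle y,y\rangle^p\ge\frac{1}{2^{2(p-1)}}\|x-y\|^{2p}.$$ *)

theory Defs
  imports "HOL-Analysis.Analysis"
begin

end

theory Submission
  imports Defs
begin

lemma conv_pow:
  fixes s t :: real
  assumes "\<bar>t\<bar> \<le> s"
  shows "(s + t) ^ p + (s - t) ^ p \<ge> 2 * s ^ p"
proof (induction p)
  case 0 then show ?case by simp
next
  case (Suc p)
  define A where "A = s + t"
  define B where "B = s - t"
  have A0: "A \<ge> 0" and B0: "B \<ge> 0" using assms by (auto simp: A_def B_def)
  have mono: "(A ^ p - B ^ p) * (A - B) \<ge> 0"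
  proof (cases "A \<ge> B")
    case True
    then have "A ^ p \<ge> B ^ p" using B0 by (simp add: power_mono)
    then show ?thesis using True by simp
  next
    case False
    then have "A ^ p \<le> B ^ p" using A0 by (simp add: power_mono)
    then show ?thesis using False by (simp add: mult_nonpos_nonpos)
  qed
  have sAB: "s = (A + B) / 2" by (simp add: A_def B_def)
  have eq: "A ^ Suc p + B ^ Suc p = (A ^ p + B ^ p) * s + (A ^ p - B ^ p) * (A - B) / 2"
    unfolding sAB by (simp add: field_simps)
  have s0: "s \<ge> 0" using assms by simp
  have "(A ^ p + B ^ p) * s \<ge> 2 * s ^ p * s"
    using Suc.IH s0 by (simp add: A_def B_def mult_right_mono)
  have "A ^ Suc p + B ^ Suc p \<ge> 2 * s ^ Suc p"
  proof -
    have "2 * s ^ Suc p = 2 * s ^ p * s" by simp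
    then show ?thesis using eq mono \<open>(A ^ p + B ^ p) * s \<ge> 2 * s ^ p * s\<close> by linarith
  qed
  then show ?case by (simp add: A_def B_def)
qed

lemma superadd_pow:
  fixes u v :: real
  assumes "u \<ge> 0" "v \<ge> 0" "p \<ge> 1"
  shows "(u + v) ^ p \<ge> u ^ p + v ^ p"
  using assms(3)
proof (induction p rule: dec_induct)
  case base then show ?case by simp
next
  case (step p)
  have "(u + v) ^ Suc p = (u + v) * (u + v) ^ p" by simp
  also have "\<dots> \<ge> (u + v) * (u ^ p + v ^ p)"
    using step.IH assms by (simp add: mult_left_mono)
  finally have "(u + v) ^ Suc p \<ge> (u + v) * (u ^ p + v ^ p)" .
  moreover have "(u + v) * (u ^ p + v ^ p) \<ge> u ^ Suc p + v ^ Suc p"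
    using assms by (simp add: algebra_simps)
  ultimately show ?case by linarith
qed

lemma scalar:
  fixes a b c :: real and p :: nat
  assumes a: "a \<ge> 0" and b: "b \<ge> 0" and M0: "a + b + 2 * c \<ge> 0" and D0: "a + b - 2 * c \<ge> 0"
    and p: "p \<ge> 1" and cond: "odd p \<or> c \<ge> 0"
  shows "a ^ p - 2 * c ^ p + b ^ p \<ge> (1 / 2 ^ (2 * (p - 1))) * (a + b - 2 * c) ^ p"
proof -
  define M where "M = (a + b + 2 * c) / 4"
  define D where "D = (a + b - 2 * c) / 4"
  have M: "M \<ge> 0" and D: "D \<ge> 0" using M0 D0 by (auto simp: M_def D_def)
  have ab: "a = (a+b)/2 + (a-b)/2" by (simp add: field_simps)
  have ab2: "b = (a+b)/2 - (a-b)/2" by (simp add: field_simps)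
  have "a ^ p + b ^ p \<ge> 2 * ((a+b)/2) ^ p"
    using conv_pow[of "(a-b)/2" "(a+b)/2" p] a b ab ab2 by (smt (verit))
  have sMD: "(a+b)/2 = M + D" and cMD: "c = M - D" by (auto simp: M_def D_def field_simps)
  have rhs: "(1 / 2 ^ (2 * (p - 1))) * (a + b - 2 * c) ^ p = 4 * D ^ p"
  proof -
    have "(a + b - 2 * c) ^ p = (4 * D) ^ p" unfolding D_def by (rule arg_cong[where f="\<lambda>z. z ^ p"]) simp
    also have "\<dots> = 4 ^ p * D ^ p" by (simp add: power_mult_distrib)
    also have "(4::real) ^ p = 4 * 2 ^ (2 * (p - 1))"
      using p by (metis (no_types) One_nat_def Suc_le_D diff_Suc_1 power_Suc power_mult
          num_double numeral_times_numeral power2_eq_square mult_2_right numeral_Bit0)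
    finally show ?thesis by simp
  qed
  have key: "(M + D) ^ p - c ^ p \<ge> 2 * D ^ p"
  proof (cases "c \<ge> 0")
    case True
    then have "M - D \<ge> 0" using cMD by simp
    from superadd_pow[OF this _ p, of "2 * D"] D
    have "(M + D) ^ p \<ge> (M - D) ^ p + (2 * D) ^ p" by (simp add: add.commute)
    moreover have "(2 * D) ^ p \<ge> 2 * D ^ p"
    proof -
      have "(2::real) ^ p \<ge> 2" using p
        by (metis One_nat_def power_one_right power_increasing one_le_numeral)
      then have "2 ^ p * D ^ p \<ge> 2 * D ^ p" using D by (simp add: mult_right_mono)
      then show ?thesis by (simp add: power_mult_distrib)
    qed
    ultimately show ?thesis using cMD by simp
  next
    case False
    then have odd: "odd p" using cond by simp
    have "c ^ p = - ((D - M) ^ p)" using cMD odd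
      by (metis minus_diff_eq power_minus_odd)
    moreover have "\<bar>M\<bar> \<le> D" using M False cMD by simp
    from conv_pow[OF this, of p] have "(D + M) ^ p + (D - M) ^ p \<ge> 2 * D ^ p" .
    ultimately show ?thesis by (simp add: add.commute)
  qed
  show ?thesis unfolding rhs using key \<open>a ^ p + b ^ p \<ge> 2 * ((a+b)/2) ^ p\<close> unfolding sMD by linarith
qed

theorem lemma4:
  fixes x y :: "'a :: {real_inner, complete_space}" and p :: nat
  assumes "p \<ge> 1"
    and "odd p \<or> inner x y \<ge> 0"
  shows "(inner x x) ^ p - 2 * (inner x y) ^ p + (inner y y) ^ p
           \<ge> (1 / 2 ^ (2 * (p - 1))) * norm (x - y) ^ (2 * p)"
proof -
  have n: "norm (x - y) ^ (2 * p) = (inner x x + inner y y - 2 * inner x y) ^ p"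
    by (simp add: power_mult power2_norm_eq_inner inner_diff inner_commute)
  have "inner (x + y) (x + y) \<ge> 0" "inner (x - y) (x - y) \<ge> 0" by simp_all
  then have "inner x x + inner y y + 2 * inner x y \<ge> 0" "inner x x + inner y y - 2 * inner x y \<ge> 0"
    by (simp_all add: inner_add inner_diff inner_commute)
  then show ?thesis unfolding n
    by (intro scalar) (use assms in auto)
qed

end
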